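(* The family $\{X\in\mathcal{X}_2:X\not\subseteq1+8\mathbb{N}_0\}$ coincides with the set of minimal elements of the poset $\mathcal{X}_2$, and the set $\{X\in\mathcal{X}_2:X\subseteq1+8\mathbb{N}_0\}$ is linearly ordered and coincides with $\{1+2^n\mathbb{N}_0:n\ge3\}$.
   Context: $\mathbb{N}=\{1,2,\dots\}$, $\mathbb{N}_0=\{0\}\cup\mathbb{N}$, $x^{\mathbb{N}}=\{x^k:k\in\mathbb{N}\}$. $\mathcal{X}_2=\{\overline{a^{\mathbb{N}}}:a\in\mathbb{N}\setminus2\mathbb{N},\ a\ne1\}$, closures taken in the $2$-adic topology on $\mathbb{N}\setminus2\mathbb{N}$ (generated by the sets $x+2^m\mathbb{N}_0$, $x,m\in\mathbb{N}$), partially ordered by reverse inclusion: $X\le Y$ iff $Y\subseteq X$. *)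

theory Defs
  imports "HOL-Analysis.Analysis"
begin

definition prog :: "nat \<Rightarrow> nat \<Rightarrow> nat set" where
  "prog x m = {x + 2^m * k | k. True}"

definition two_adic_top :: "nat topology" where
  "two_adic_top = topology_generated_by {prog x m \<inter> {n. odd n} | x m. x \<ge> 1 \<and> m \<ge> 1}"

definition powers :: "nat \<Rightarrow> nat set" where
  "powers a = {a ^ k | k. k \<ge> 1}"

definition X2 :: "nat set set" where
  "X2 = {two_adic_top closure_of (powers a) | a. odd a \<and> a \<noteq> 1}"

end

theory Submission
  imports Defs "HOL-Number_Theory.Cong"
begin


lemma prog_iff: "y \<in> prog x m \<longleftrightarrow> x \<le> y \<and> [y = x] (mod 2^m)"
  unfolding prog_def by (auto simp: cong_le_nat)

lemma prog_mono: "n \<le> m \<Longrightarrow> prog x m \<subseteq> prog x n"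
proof
  fix y assume "n \<le> m" "y \<in> prog x m"
  then show "y \<in> prog x n"
    unfolding prog_iff using cong_dvd_modulus_nat le_imp_power_dvd by blast
qed

lemma topspace_two_adic: "topspace two_adic_top = {x. odd x}"
proof -
  have "\<Union>{prog x m \<inter> {n. odd n} | x m. x \<ge> 1 \<and> m \<ge> 1} = {x. odd x}"
  proof (rule set_eqI, rule iffI)
    fix y :: nat assume "y \<in> {x. odd x}"
    then have "y \<in> prog y 1 \<inter> {n. odd n}" "y \<ge> 1" using odd_pos by (auto simp: prog_iff Suc_le_eq)
    then show "y \<in> \<Union>{prog x m \<inter> {n. odd n} | x m. x \<ge> 1 \<and> m \<ge> 1}" by blast
  qed auto
  then show ?thesis unfolding two_adic_top_def by simp
qed

lemma open_nbhd:
  assumes "generate_topology_on {prog x m \<inter> {n. odd n} | x m. x \<ge> 1 \<and> m \<ge> 1} T"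
  shows "\<forall>x\<in>T. odd x \<longrightarrow> (\<exists>m\<ge>1. prog x m \<subseteq> T)"
  using assms
proof (induction rule: generate_topology_on.induct)
  case Empty
  then show ?case by simp
next
  case (Int a b)
  show ?case
  proof (intro ballI impI)
    fix x assume "x \<in> a \<inter> b" "odd x"
    then obtain m1 m2 where "m1 \<ge> 1" "prog x m1 \<subseteq> a" "m2 \<ge> 1" "prog x m2 \<subseteq> b"
      using Int.IH by blast
    then have "prog x (max m1 m2) \<subseteq> a \<inter> b"
      using prog_mono[of m1 "max m1 m2" x] prog_mono[of m2 "max m1 m2" x] by auto
    then show "\<exists>m\<ge>1. prog x m \<subseteq> a \<inter> b" using \<open>m1 \<ge> 1\<close> by (intro exI[of _ "max m1 m2"]) auto
  qed
next
  case (UN K)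
  then show ?case by blast
next
  case (Basis s)
  then obtain x0 m0 where s: "s = prog x0 m0 \<inter> {n. odd n}" "m0 \<ge> 1" by blast
  show ?case
  proof (intro ballI impI)
    fix x assume "x \<in> s" "odd x"
    then have x: "x0 \<le> x" "[x = x0] (mod 2^m0)" using s by (auto simp: prog_iff)
    have "prog x m0 \<subseteq> s"
    proof
      fix y assume "y \<in> prog x m0"
      then have y: "x \<le> y" "[y = x] (mod 2^m0)" by (auto simp: prog_iff)
      then have "[y = x0] (mod 2^m0)" using x cong_trans by blast
      moreover have "odd y"
      proof -
        have "[y = x] (mod 2)" using y(2) \<open>m0 \<ge> 1\<close>
          by (metis cong_dvd_modulus_nat dvd_power le_numeral_extra(4) power_one_right le_imp_power_dvd)
        then show ?thesis using \<open>odd x\<close> by (simp add: cong_def odd_iff_mod_2_eq_one)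
      qed
      ultimately show "y \<in> s" using s x y by (auto simp: prog_iff)
    qed
    then show "\<exists>m\<ge>1. prog x m \<subseteq> s" using s(2) by blast
  qed
qed

lemma closure_iff:
  "x \<in> two_adic_top closure_of S \<longleftrightarrow> odd x \<and> (\<forall>m\<ge>1. \<exists>y\<in>S. y \<in> prog x m)"
proof
  assume H: "x \<in> two_adic_top closure_of S"
  then have ox: "odd x" using topspace_two_adic by (auto simp: in_closure_of)
  show "odd x \<and> (\<forall>m\<ge>1. \<exists>y\<in>S. y \<in> prog x m)"
  proof (intro conjI allI impI ox)
    fix m :: nat assume "m \<ge> 1"
    then have "openin two_adic_top (prog x m \<inter> {n. odd n})"
    proof -
      have "x \<ge> 1" using ox odd_pos by (simp add: Suc_le_eq)
      then have "prog x m \<inter> {n. odd n} \<in> {prog x m \<inter> {n. odd n} | x m. x \<ge> 1 \<and> m \<ge> 1}"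
        using \<open>m \<ge> 1\<close> by blast
      then show ?thesis unfolding two_adic_top_def by (rule topology_generated_by_Basis)
    qed
    moreover have "x \<in> prog x m \<inter> {n. odd n}" using ox by (auto simp: prog_iff)
    ultimately have "\<exists>y. y \<in> S \<and> y \<in> prog x m \<inter> {n. odd n}"
      using H unfolding in_closure_of by (meson)
    then show "\<exists>y\<in>S. y \<in> prog x m" by blast
  qed
next
  assume H: "odd x \<and> (\<forall>m\<ge>1. \<exists>y\<in>S. y \<in> prog x m)"
  show "x \<in> two_adic_top closure_of S"
    unfolding in_closure_of topspace_two_adic
  proof (intro conjI allI impI)
    show "x \<in> {x. odd x}" using H by simp
    fix T assume "x \<in> T \<and> openin two_adic_top T"
    then have "generate_topology_on {prog x m \<inter> {n. odd n} | x m. x \<ge> 1 \<and> m \<ge> 1} T" "x \<in> T"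
      unfolding two_adic_top_def openin_topology_generated_by_iff by auto
    then obtain m where "m \<ge> 1" "prog x m \<subseteq> T" using open_nbhd H by blast
    then show "\<exists>y. y \<in> S \<and> y \<in> T" using H by blast
  qed
qed



lemma pow_lift:
  fixes c u w :: nat
  assumes "c = 1 + 2^w * u" "odd u" "w \<ge> 2"
  shows "\<exists>q. odd q \<and> c^(2^j) = 1 + 2^(w+j) * q"
proof (induction j)
  case 0
  then show ?case using assms by auto
next
  case (Suc j)
  then obtain q where q: "odd q" "c^(2^j) = 1 + 2^(w+j) * q" by blast
  obtain n where n: "w + j = Suc n" "n \<ge> 1" using assms(3) by (intro that[of "w + j - 1"]) auto
  have "c^(2^Suc j) = (c^(2^j))^2" by (simp add: power_mult[symmetric] mult.commute)
  also have "\<dots> = 1 + 2^(w + Suc j) * (q + 2^n * q^2)"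
  proof -
    have e: "w + Suc j = Suc (Suc n)" using n by simp
    show ?thesis unfolding q(2) n(1) e by (simp add: power2_eq_square algebra_simps)
  qed
  finally show ?case using q(1) n(2) by (intro exI[of _ "q + 2^n * q^2"]) auto
qed

lemma lift_step:
  fixes a p u w x m k :: nat
  assumes rep: "a^p = 1 + 2^w * u" "odd u" "w \<ge> 2" and "odd a" and "w \<le> m"
    and k: "[a^k = x] (mod 2^m)"
  shows "\<exists>k'. [a^k' = x] (mod 2^(Suc m))"
proof -
  obtain q where q: "odd q" "(a^p)^(2^(m-w)) = 1 + 2^m * q"
    using pow_lift[OF rep, of "m-w"] \<open>w \<le> m\<close> by auto
  have ki: "(2::int)^m dvd int (a^k) - int x" using k by (simp add: cong_int_iff[symmetric] cong_iff_dvd_diff)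
  then obtain t where t: "int (a^k) - int x = 2^m * t" by blast
  show ?thesis
  proof (cases "even t")
    case True
    then have "(2::int)^Suc m dvd int (a^k) - int x" using t by auto
    then have "[int (a^k) = int x] (mod 2^Suc m)" by (simp add: cong_iff_dvd_diff)
    then show ?thesis by (metis cong_int_iff of_nat_numeral of_nat_power)
  next
    case False
    define k' where "k' = k + p * 2^(m-w)"
    have "a^k' = a^k * (a^p)^(2^(m-w))" by (simp add: k'_def power_add power_mult)
    also have "\<dots> = a^k * (1 + 2^m * q)" using q(2) by simp
    finally have "int (a^k') = int (a^k) * (1 + 2^m * int q)" by (simp add: algebra_simps)
    then have "int (a^k') - int x = 2^m * (t + int (a^k) * int q)"
      using t by (simp add: algebra_simps)
    moreover have "even (t + int (a^k) * int q)" using False \<open>odd a\<close> q(1) by simp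
    ultimately have "(2::int)^Suc m dvd int (a^k') - int x" by auto
    then have "[int (a^k') = int x] (mod 2^Suc m)" by (simp add: cong_iff_dvd_diff)
    then show ?thesis by (metis cong_int_iff of_nat_numeral of_nat_power)
  qed
qed

lemma lift_all:
  fixes a p u w x k0 :: nat
  assumes rep: "a^p = 1 + 2^w * u" "odd u" "w \<ge> 2" and "odd a"
    and k: "[a^k0 = x] (mod 2^w)"
  shows "\<exists>k. [a^k = x] (mod 2^m)"
proof (cases "m \<le> w")
  case True
  then show ?thesis using k cong_dvd_modulus_nat le_imp_power_dvd by blast
next
  case False
  have "\<exists>k. [a^k = x] (mod 2^(w + d))" for d
  proof (induction d)
    case 0 then show ?case using k by auto
  next
    case (Suc d)
    then obtain k where "[a^k = x] (mod 2^(w + d))" by blast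
    from lift_step[OF rep \<open>odd a\<close> _ this] show ?case by auto
  qed
  from this[of "m - w"] False show ?thesis by auto
qed

lemma large_exp:
  fixes a p u w x m k :: nat
  assumes rep: "a^p = 1 + 2^w * u" "odd u" "w \<ge> 2" and "a \<ge> 2" "p \<ge> 1" "x \<ge> 1"
    and k: "[a^k = x] (mod 2^m)"
  shows "\<exists>k\<ge>1. x \<le> a^k \<and> [a^k = x] (mod 2^m)"
proof -
  obtain q where q: "(a^p)^(2^m) = 1 + 2^(w+m) * q"
    using pow_lift[OF rep, of m] by auto
  have "(a^p)^(2^m) = 1 + 2^m * (2^w * q)" unfolding q by (simp add: power_add mult_ac)
  moreover have "[1 + 2^m * (2^w * q) = 1 + 0] (mod 2^m)"
    by (intro cong_add cong_refl) (simp add: cong_0_iff)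
  ultimately have "[(a^p)^(2^m) = 1] (mod 2^m)" by simp
  then have per: "[a^(p * 2^m) = 1] (mod 2^m)" by (simp add: power_mult)
  define K where "K = k + x * (p * 2^m)"
  have "x * (p*2^m) = (p*2^m) * x" by simp
  then have "a^K = a^k * (a^(p*2^m))^x" unfolding K_def power_add by (simp only: power_mult)
  moreover have "[a^k * (a^(p*2^m))^x = a^k * 1^x] (mod 2^m)"
    using per by (intro cong_mult cong_pow) auto
  ultimately have c: "[a^K = x] (mod 2^m)" using k cong_trans by auto
  have "1 \<le> p * 2^m" using \<open>p \<ge> 1\<close> by simp
  then have "x * 1 \<le> x * (p * 2^m)" by (rule mult_le_mono2)
  then have "x \<le> K" unfolding K_def by (metis mult.right_neutral trans_le_add2)
  also have "K < 2^K" by simp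
  also have "2^K \<le> a^K" using \<open>a \<ge> 2\<close> by (simp add: power_mono)
  finally have "x \<le> a^K" by simp
  moreover have "K \<ge> 1" using \<open>x \<le> K\<close> \<open>x \<ge> 1\<close> by simp
  ultimately show ?thesis using c by blast
qed

lemma closure_powers:
  fixes a p u w :: nat
  assumes rep: "a^p = 1 + 2^w * u" "odd u" "w \<ge> 2" and "odd a" "a \<noteq> 1" "p \<ge> 1"
  shows "two_adic_top closure_of (powers a) = {x. odd x \<and> (\<exists>k. [a^k = x] (mod 2^w))}"
proof (rule set_eqI, rule iffI)
  fix x assume "x \<in> two_adic_top closure_of (powers a)"
  then have "odd x" "\<exists>y\<in>powers a. y \<in> prog x w" using assms(3) by (auto simp: closure_iff)
  then show "x \<in> {x. odd x \<and> (\<exists>k. [a^k = x] (mod 2^w))}"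
    by (auto simp: powers_def prog_iff)
next
  fix x assume "x \<in> {x. odd x \<and> (\<exists>k. [a^k = x] (mod 2^w))}"
  then obtain k0 where x: "odd x" "[a^k0 = x] (mod 2^w)" by blast
  have a2: "a \<ge> 2" using \<open>odd a\<close> \<open>a \<noteq> 1\<close> by (metis One_nat_def Suc_1 dvd_0_right less_2_cases not_le)
  have x1: "x \<ge> 1" using x(1) by (metis odd_pos Suc_le_eq One_nat_def)
  show "x \<in> two_adic_top closure_of (powers a)"
    unfolding closure_iff
  proof (intro conjI allI impI x(1))
    fix m :: nat assume "m \<ge> 1"
    obtain k where "[a^k = x] (mod 2^m)" using lift_all[OF rep \<open>odd a\<close> x(2)] by blast
    then obtain k' where "k' \<ge> 1" "x \<le> a^k'" "[a^k' = x] (mod 2^m)"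
      using large_exp[OF rep a2 \<open>p \<ge> 1\<close> x1] by blast
    then show "\<exists>y\<in>powers a. y \<in> prog x m" by (auto simp: powers_def prog_iff)
  qed
qed



lemma cong_pow2_down: "m \<le> n \<Longrightarrow> [x = y] (mod 2^n) \<Longrightarrow> [x = y] (mod (2::nat)^m)"
  using cong_dvd_modulus_nat le_imp_power_dvd by blast

lemma cong4: "2 \<le> n \<Longrightarrow> [x = y] (mod 2^n) \<Longrightarrow> x mod 4 = y mod (4::nat)"
  using cong_pow2_down[of 2 n x y] by (simp add: cong_def)

lemma cong8: "3 \<le> n \<Longrightarrow> [x = y] (mod 2^n) \<Longrightarrow> x mod 8 = y mod (8::nat)"
  using cong_pow2_down[of 3 n x y] by (simp add: cong_def)

lemma odd_decomp: "(n::nat) > 0 \<Longrightarrow> \<exists>v u. n = 2^v * u \<and> odd u"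
proof (induction n rule: less_induct)
  case (less n)
  show ?case
  proof (cases "odd n")
    case True then show ?thesis by (intro exI[of _ 0] exI[of _ n]) auto
  next
    case False
    then obtain m where m: "n = 2 * m" by blast
    then have "m < n" "m > 0" using less.prems by auto
    then obtain v u where "m = 2^v * u" "odd u" using less.IH by blast
    then show ?thesis using m by (intro exI[of _ "Suc v"] exI[of _ u]) auto
  qed
qed

lemma cong_one_rep: "[1 + 2^w * u = 1] (mod (2::nat)^w)"
proof -
  have "[1 + 2^w * u = 1 + 0] (mod (2::nat)^w)"
    by (intro cong_add cong_refl) (simp add: cong_0_iff)
  then show ?thesis by simp
qed

lemma type1:
  fixes a v u :: nat
  assumes "a = 1 + 2^v * u" "odd u" "v \<ge> 2"
  shows "two_adic_top closure_of (powers a) = prog 1 v"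
proof -
  have oa: "odd a" using assms by auto
  have a1: "a \<noteq> 1" using assms odd_pos[OF assms(2)] by auto
  have "a^1 = 1 + 2^v * u" using assms by simp
  note cl = closure_powers[OF this assms(2,3) oa a1]
  have ca: "[a = 1] (mod 2^v)" using assms(1) cong_one_rep by simp
  have ck: "[a^k = 1] (mod 2^v)" for k using cong_pow[OF ca, of k] by simp
  have "{x. odd x \<and> (\<exists>k. [a ^ k = x] (mod 2 ^ v))} = prog 1 v"
  proof (rule set_eqI, rule iffI)
    fix x assume "x \<in> {x. odd x \<and> (\<exists>k. [a ^ k = x] (mod 2 ^ v))}"
    then obtain k where x: "odd x" "[a^k = x] (mod 2^v)" by blast
    then have "[x = 1] (mod 2^v)" using ck by (meson cong_sym cong_trans)
    moreover have "1 \<le> x" using x(1) odd_pos by (simp add: Suc_le_eq)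
    ultimately show "x \<in> prog 1 v" by (simp add: prog_iff)
  next
    fix x assume "x \<in> prog 1 v"
    then have x: "[x = 1] (mod 2^v)" by (simp add: prog_iff)
    then have "x mod 4 = 1" using cong4[OF assms(3) x] by simp
    then have "odd x" by (metis dvd_mod_iff even_numeral odd_one)
    moreover have "[a^0 = x] (mod 2^v)" using x by (simp add: cong_sym)
    ultimately show "x \<in> {x. odd x \<and> (\<exists>k. [a ^ k = x] (mod 2 ^ v))}" by blast
  qed
  then show ?thesis using cl by simp
qed

lemma type2_vals:
  fixes b w u :: nat
  assumes "b^2 = 1 + 2^w * u"
  shows "[b^k = 1] (mod 2^w) \<or> [b^k = b] (mod 2^w)"
proof -
  have c2: "[b^2 = 1] (mod 2^w)" using assms cong_one_rep by simp
  have e: "[(b^2)^(k div 2) = 1] (mod 2^w)" using cong_pow[OF c2, of "k div 2"] by simp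
  show ?thesis
  proof (cases "even k")
    case True
    then have "k = 2 * (k div 2)" by simp
    then have "b^k = b^(2 * (k div 2))" by (rule arg_cong)
    also have "\<dots> = (b^2)^(k div 2)" by (rule power_mult)
    finally have "b^k = (b^2)^(k div 2)" .
    then show ?thesis using e by simp
  next
    case False
    then have "k = 2 * (k div 2) + 1" by simp
    then have "b^k = b^(2 * (k div 2) + 1)" by (rule arg_cong)
    also have "\<dots> = (b^2)^(k div 2) * b" by (simp only: power_add power_mult power_one_right)
    finally have "b^k = (b^2)^(k div 2) * b" .
    moreover have "[(b^2)^(k div 2) * b = 1 * b] (mod 2^w)" using e by (intro cong_mult) auto
    ultimately show ?thesis by simp
  qed
qed

lemma sq_mod8: "odd (a::nat) \<Longrightarrow> a^2 mod 8 = 1"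
proof -
  assume "odd a"
  then obtain t where t: "a = 2*t + 1" by (metis oddE)
  have "even (t*(t+1))" by simp
  then obtain r where r: "t*(t+1) = 2*r" by blast
  have "a^2 = 4*(t*(t+1)) + 1" unfolding t by (simp add: power2_eq_square algebra_simps)
  also have "\<dots> = 8*r + 1" using r by simp
  finally show ?thesis by simp
qed

lemma not8: "8 dvd 2^w * u \<Longrightarrow> odd (u::nat) \<Longrightarrow> 3 \<le> w"
proof (rule ccontr)
  assume h: "8 dvd 2^w * u" "odd u" "\<not> 3 \<le> w"
  then obtain r where u: "u = 2*r + 1" by (metis oddE)
  have "w = 0 \<or> w = 1 \<or> w = 2" using h(3) by auto
  then show False using h(1) unfolding u by (elim disjE) (simp_all, presburger+)
qed

lemma not4: "4 dvd 2^w * u \<Longrightarrow> odd (u::nat) \<Longrightarrow> 2 \<le> w"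
proof (rule ccontr)
  assume h: "4 dvd 2^w * u" "odd u" "\<not> 2 \<le> w"
  then obtain r where u: "u = 2*r + 1" by (metis oddE)
  have "w = 0 \<or> w = 1" using h(3) by auto
  then show False using h(1) unfolding u by (elim disjE) (simp_all, presburger+)
qed

lemma classify:
  assumes "X \<in> X2"
  shows "(\<exists>v\<ge>2. X = prog 1 v) \<or>
         (\<exists>a w u. odd a \<and> a \<noteq> 1 \<and> a mod 4 = 3 \<and> odd u \<and> w \<ge> 3 \<and> a^2 = 1 + 2^w*u
            \<and> X = two_adic_top closure_of powers a)"
proof -
  obtain a where a: "odd a" "a \<noteq> 1" "X = two_adic_top closure_of powers a"
    using assms unfolding X2_def by blast
  have a3: "a \<ge> 3" using a(1,2) by presburger
  have "a mod 4 = 1 \<or> a mod 4 = 3" using a(1) by presburger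
  then show ?thesis
  proof
    assume m: "a mod 4 = 1"
    have "a - 1 > 0" using a3 by simp
    then obtain v u where vu: "a - 1 = 2^v * u" "odd u" using odd_decomp by blast
    have "4 dvd a - 1" using m a3 by presburger
    then have "v \<ge> 2" using not4 vu by metis
    moreover have "a = 1 + 2^v * u" using vu(1) a3 by simp
    ultimately have "X = prog 1 v" using type1 vu(2) a(3) by blast
    then show ?thesis using \<open>v \<ge> 2\<close> by blast
  next
    assume m: "a mod 4 = 3"
    have "a^2 \<ge> 9" using a3 power_mono[of 3 a 2] by simp
    then have "a^2 - 1 > 0" by simp
    then obtain w u where wu: "a^2 - 1 = 2^w * u" "odd u" using odd_decomp by blast
    have "8 dvd a^2 - 1" 
    proof -
      have "\<forall>y::nat. y mod 8 = 1 \<longrightarrow> 8 dvd y - 1" by presburger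
      then show ?thesis using sq_mod8[OF a(1)] by blast
    qed
    then have "w \<ge> 3" using not8 wu by metis
    moreover have "a^2 = 1 + 2^w * u" using wu(1) \<open>a^2 \<ge> 9\<close> by simp
    ultimately show ?thesis using a m wu(2) by blast
  qed
qed



lemma type2_set:
  assumes "odd b" "b \<noteq> 1" "b^2 = 1 + 2^w*u" "odd u" "w \<ge> 3"
  shows "two_adic_top closure_of powers b = {x. odd x \<and> (\<exists>k. [b^k = x] (mod 2^w))}"
  using closure_powers[OF assms(3,4) _ assms(1,2)] assms(5) by simp

lemma type2_self:
  assumes "odd b" "b \<noteq> 1" "b^2 = 1 + 2^w*u" "odd u" "w \<ge> 3"
  shows "b \<in> two_adic_top closure_of powers b"
proof -
  have "[b^1 = b] (mod 2^w)" by simp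
  then show ?thesis unfolding type2_set[OF assms] using assms(1) by blast
qed

lemma type2_mem:
  assumes "odd b" "b \<noteq> 1" "b^2 = 1 + 2^w*u" "odd u" "w \<ge> 3"
    and "y \<in> two_adic_top closure_of powers b"
  shows "[y = 1] (mod 2^w) \<or> [y = b] (mod 2^w)"
proof -
  obtain k where k: "[b^k = y] (mod 2^w)" using assms(6) unfolding type2_set[OF assms(1-5)] by blast
  from type2_vals[OF assms(3), of k] show ?thesis
    using k by (meson cong_sym cong_trans)
qed

lemma five_type2:
  assumes "odd b" "b \<noteq> 1" "b^2 = 1 + 2^w*u" "odd u" "w \<ge> 3" "b mod 4 = 3"
  shows "5 \<notin> two_adic_top closure_of powers b"
proof
  assume "5 \<in> two_adic_top closure_of powers b"
  from type2_mem[OF assms(1-5) this] show False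
  proof
    assume "[(5::nat) = 1] (mod 2^w)"
    from cong8[OF assms(5) this] show False by simp
  next
    assume "[5 = b] (mod 2^w)"
    from cong4[OF _ this] assms(5,6) show False by simp
  qed
qed

lemma notin_prog1: "a mod 4 = 3 \<Longrightarrow> n \<ge> 2 \<Longrightarrow> a \<notin> prog 1 n"
  using cong4[of n a 1] by (auto simp: prog_iff)

lemma five_prog2: "5 \<in> prog 1 2"
  by (simp add: prog_iff cong_def)

lemma five_not_prog: "n \<ge> 3 \<Longrightarrow> 5 \<notin> prog 1 n"
  using cong8[of n 5 1] by (auto simp: prog_iff)

lemma prog_in_X2: "n \<ge> 2 \<Longrightarrow> prog 1 n \<in> X2"
proof -
  assume n: "n \<ge> 2"
  have "two_adic_top closure_of powers (1 + 2^n * 1) = prog 1 n" by (rule type1) (use n in auto)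
  moreover have "odd (1 + 2^n * (1::nat))" "1 + 2^n * (1::nat) \<noteq> 1" using n by auto
  ultimately show ?thesis unfolding X2_def by blast
qed

lemma type2_eq:
  assumes a: "odd a" "a \<noteq> 1" "a mod 4 = 3"
    and b: "odd b" "b \<noteq> 1" "b^2 = 1 + 2^w*u" "odd u" "w \<ge> 3"
    and mem: "a \<in> two_adic_top closure_of powers b"
  shows "two_adic_top closure_of powers a = two_adic_top closure_of powers b"
proof -
  have ab: "[a = b] (mod 2^w)"
    using type2_mem[OF b mem]
  proof
    assume "[a = 1] (mod 2^w)"
    from cong4[OF _ this] a(3) b(5) show ?thesis by simp
  qed
  then have "[int a = int b] (mod 2^w)" by (metis cong_int_iff of_nat_numeral of_nat_power)
  then obtain t where t: "int a = int b + 2^w * t" by (metis cong_iff_lin cong_sym)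
  define U where "U = int u + 2 * int b * t + 2^w * t^2"
  have "int (a^2) = (int b + 2^w * t)^2" using t by simp
  also have "\<dots> = int (b^2) + 2^w * (2 * int b * t + 2^w * t^2)"
    by (simp add: power2_eq_square algebra_simps)
  also have "\<dots> = 1 + 2^w * U" unfolding U_def b(3) by (simp add: algebra_simps)
  finally have eq: "int (a^2) = 1 + 2^w * U" .
  have "U \<ge> 0"
  proof -
    have "a > 0" using a(1) by (simp add: odd_pos)
    then have "int (a^2) \<ge> 1" by simp
    then have "2^w * U \<ge> 0" using eq by linarith
    then show ?thesis by (simp add: zero_le_mult_iff)
  qed
  have "odd U" unfolding U_def using b(4) b(5) by simp
  have a2: "a^2 = 1 + 2^w * nat U"
  proof -
    have "int (a^2) = int (1 + 2^w * nat U)" using eq \<open>U \<ge> 0\<close> by simp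
    then show ?thesis by (simp only: of_nat_eq_iff)
  qed
  have on: "odd (nat U)" using \<open>odd U\<close> \<open>U \<ge> 0\<close> by (simp add: even_nat_iff)
  have "two_adic_top closure_of powers a = {x. odd x \<and> (\<exists>k. [a^k = x] (mod 2^w))}"
    by (rule type2_set[OF a(1,2) a2 on b(5)])
  also have "\<dots> = {x. odd x \<and> (\<exists>k. [b^k = x] (mod 2^w))}"
  proof -
    have "[a^k = x] (mod 2^w) \<longleftrightarrow> [b^k = x] (mod 2^w)" for k x
      using cong_pow[OF ab, of k] by (meson cong_sym cong_trans)
    then show ?thesis by simp
  qed
  also have "\<dots> = two_adic_top closure_of powers b" by (rule type2_set[OF b, symmetric])
  finally show ?thesis .
qed



lemma part3: "{X \<in> X2. X \<subseteq> prog 1 3} = {prog 1 n | n. n \<ge> 3}"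
proof (rule set_eqI, rule iffI)
  fix X assume "X \<in> {X \<in> X2. X \<subseteq> prog 1 3}"
  then have X: "X \<in> X2" "X \<subseteq> prog 1 3" by auto
  from classify[OF X(1)] show "X \<in> {prog 1 n | n. n \<ge> 3}"
  proof
    assume "\<exists>v\<ge>2. X = prog 1 v"
    then obtain v where v: "v \<ge> 2" "X = prog 1 v" by blast
    have "v \<noteq> 2"
    proof
      assume "v = 2"
      then have "5 \<in> X" using v five_prog2 by simp
      then show False using X(2) five_not_prog[of 3] by auto
    qed
    then show ?thesis using v by auto
  next
    assume "\<exists>a w u. odd a \<and> a \<noteq> 1 \<and> a mod 4 = 3 \<and> odd u \<and> w \<ge> 3 \<and> a^2 = 1 + 2^w*u
            \<and> X = two_adic_top closure_of powers a"
    then obtain a w u where h: "odd a" "a \<noteq> 1" "a mod 4 = 3" "odd u" "w \<ge> 3" "a^2 = 1 + 2^w*u"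
      "X = two_adic_top closure_of powers a" by blast
    have "a \<in> X" using type2_self[OF h(1,2,6,4,5)] h(7) by simp
    then show ?thesis using X(2) notin_prog1[OF h(3), of 3] by auto
  qed
next
  fix X assume "X \<in> {prog 1 n | n. n \<ge> 3}"
  then obtain n where n: "n \<ge> 3" "X = prog 1 n" by blast
  then show "X \<in> {X \<in> X2. X \<subseteq> prog 1 3}" using prog_in_X2[of n] prog_mono[OF n(1)] by auto
qed

lemma part1_fwd:
  assumes X: "X \<in> X2" "\<not> X \<subseteq> prog 1 3" and Y: "Y \<in> X2" "X \<subseteq> Y"
  shows "Y = X"
  using classify[OF X(1)]
proof
  assume "\<exists>v\<ge>2. X = prog 1 v"
  then obtain v where v: "v \<ge> 2" "X = prog 1 v" by blast
  have "v = 2" using X(2) v prog_mono[of 3 v 1] by (cases "v \<ge> 3") auto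
  then have "5 \<in> Y" using v five_prog2 Y(2) by auto
  from classify[OF Y(1)] show ?thesis
  proof
    assume "\<exists>v\<ge>2. Y = prog 1 v"
    then obtain v' where v': "v' \<ge> 2" "Y = prog 1 v'" by blast
    have "v' = 2" using \<open>5 \<in> Y\<close> v' five_not_prog[of v'] by (cases "v' \<ge> 3") auto
    then show ?thesis using v v' \<open>v = 2\<close> by simp
  next
    assume "\<exists>a w u. odd a \<and> a \<noteq> 1 \<and> a mod 4 = 3 \<and> odd u \<and> w \<ge> 3 \<and> a^2 = 1 + 2^w*u
            \<and> Y = two_adic_top closure_of powers a"
    then obtain b w u where h: "odd b" "b \<noteq> 1" "b mod 4 = 3" "odd u" "w \<ge> 3" "b^2 = 1 + 2^w*u"
      "Y = two_adic_top closure_of powers b" by blast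
    then show ?thesis using five_type2[OF h(1,2,6,4,5,3)] \<open>5 \<in> Y\<close> by simp
  qed
next
  assume "\<exists>a w u. odd a \<and> a \<noteq> 1 \<and> a mod 4 = 3 \<and> odd u \<and> w \<ge> 3 \<and> a^2 = 1 + 2^w*u
            \<and> X = two_adic_top closure_of powers a"
  then obtain a w u where h: "odd a" "a \<noteq> 1" "a mod 4 = 3" "odd u" "w \<ge> 3" "a^2 = 1 + 2^w*u"
      "X = two_adic_top closure_of powers a" by blast
  have "a \<in> Y" using type2_self[OF h(1,2,6,4,5)] h(7) Y(2) by auto
  from classify[OF Y(1)] show ?thesis
  proof
    assume "\<exists>v\<ge>2. Y = prog 1 v"
    then obtain v' where v': "v' \<ge> 2" "Y = prog 1 v'" by blast
    then show ?thesis using \<open>a \<in> Y\<close> notin_prog1[OF h(3) v'(1)] by simp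
  next
    assume "\<exists>a w u. odd a \<and> a \<noteq> 1 \<and> a mod 4 = 3 \<and> odd u \<and> w \<ge> 3 \<and> a^2 = 1 + 2^w*u
            \<and> Y = two_adic_top closure_of powers a"
    then obtain b w' u' where g: "odd b" "b \<noteq> 1" "b mod 4 = 3" "odd u'" "w' \<ge> 3" "b^2 = 1 + 2^w'*u'"
      "Y = two_adic_top closure_of powers b" by blast
    have "two_adic_top closure_of powers a = two_adic_top closure_of powers b"
      using type2_eq[OF h(1,2,3) g(1,2,6,4,5)] \<open>a \<in> Y\<close> g(7) by simp
    then show ?thesis using h(7) g(7) by simp
  qed
qed

theorem lemma4p9:
  shows "{X \<in> X2. \<not> X \<subseteq> prog 1 3} =
           {X \<in> X2. \<not> (\<exists>Y \<in> X2. Y \<noteq> X \<and> X \<subseteq> Y)}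
       \<and> (\<forall>X \<in> {X \<in> X2. X \<subseteq> prog 1 3}. \<forall>Y \<in> {X \<in> X2. X \<subseteq> prog 1 3}.
             X \<subseteq> Y \<or> Y \<subseteq> X)
       \<and> {X \<in> X2. X \<subseteq> prog 1 3} = {prog 1 n | n. n \<ge> 3}"
proof (intro conjI)
  show "{X \<in> X2. X \<subseteq> prog 1 3} = {prog 1 n | n. n \<ge> 3}" by (rule part3)
next
  show "\<forall>X \<in> {X \<in> X2. X \<subseteq> prog 1 3}. \<forall>Y \<in> {X \<in> X2. X \<subseteq> prog 1 3}. X \<subseteq> Y \<or> Y \<subseteq> X"
  proof (intro ballI)
    fix X Y assume "X \<in> {X \<in> X2. X \<subseteq> prog 1 3}" "Y \<in> {X \<in> X2. X \<subseteq> prog 1 3}"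
    then obtain n m where "X = prog 1 n" "Y = prog 1 m" unfolding part3 by blast
    then show "X \<subseteq> Y \<or> Y \<subseteq> X" using prog_mono[of n m 1] prog_mono[of m n 1] nat_le_linear by blast
  qed
next
  show "{X \<in> X2. \<not> X \<subseteq> prog 1 3} = {X \<in> X2. \<not> (\<exists>Y \<in> X2. Y \<noteq> X \<and> X \<subseteq> Y)}"
  proof (rule set_eqI, rule iffI)
    fix X assume "X \<in> {X \<in> X2. \<not> X \<subseteq> prog 1 3}"
    then show "X \<in> {X \<in> X2. \<not> (\<exists>Y \<in> X2. Y \<noteq> X \<and> X \<subseteq> Y)}" using part1_fwd by blast
  next
    fix X assume H: "X \<in> {X \<in> X2. \<not> (\<exists>Y \<in> X2. Y \<noteq> X \<and> X \<subseteq> Y)}"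
    show "X \<in> {X \<in> X2. \<not> X \<subseteq> prog 1 3}"
    proof (rule ccontr)
      assume "X \<notin> {X \<in> X2. \<not> X \<subseteq> prog 1 3}"
      then have "X \<in> {X \<in> X2. X \<subseteq> prog 1 3}" using H by auto
      then obtain n where n: "n \<ge> 3" "X = prog 1 n" unfolding part3 by blast
      have "prog 1 2 \<in> X2" by (rule prog_in_X2) simp
      moreover have "X \<subseteq> prog 1 2" using n prog_mono[of 2 n 1] by simp
      moreover have "prog 1 2 \<noteq> X" using n five_prog2 five_not_prog[OF n(1)] by auto
      ultimately show False using H by blast
    qed
  qed
qed

end
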